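(* Let $n\geq 1$ and let $C$ be an all-ones CRC in $G_n$ with covering radius $\rho\geq 2$, $c_1=1$ and $c_2=2$. Then there is a CRC $D$ in $H(2n,2)$ with the same parameter matrix such that $C=\{x\in\mathbb{Z}^n:(\tau(x_1\bmod 4),\ldots,\tau(x_n\bmod 4))\in D\}$.
   Context: $G_n$: vertex set $\mathbb{Z}^n$, $x\sim y$ iff $\sum_i|x_i-y_i|=1$. $H(2n,2)$: binary Hamming graph on $\{0,1\}^{2n}$. For a code $C$ with covering radius $\rho$, $C_i=\{v:d(v,C)=i\}$; $C$ is a CRC if for all $i,j$ every vertex of $C_i$ has the same number $\alpha_{ij}$ of neighbours in $C_j$, with $\alpha_{ij}=0$ for $|i-j|>1$; $a_i=\alpha_{ii}$, $c_i=\alpha_{i,i-1}$; parameter matrix $(\alpha_{ij})$. $C$ is all-ones if $a_i=1$ for all $i$. $\tau$ is the Gray map $\tau(0)=(00),\tau(1)=(10),\tau(2)=(11),\tau(3)=(01)$, applied coordinatewise and concatenated. *)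

theory Defs
  imports Main
begin

definition edges :: "'a set \<Rightarrow> ('a \<Rightarrow> 'a \<Rightarrow> bool) \<Rightarrow> ('a \<times> 'a) set" where
  "edges V adj = {(x, y). x \<in> V \<and> y \<in> V \<and> adj x y}"

definition dist_code :: "'a set \<Rightarrow> ('a \<Rightarrow> 'a \<Rightarrow> bool) \<Rightarrow> 'a set \<Rightarrow> 'a \<Rightarrow> nat" where
  "dist_code V adj C v = (LEAST k. \<exists>c\<in>C. (v, c) \<in> edges V adj ^^ k)"

definition is_CRC :: "'a set \<Rightarrow> ('a \<Rightarrow> 'a \<Rightarrow> bool) \<Rightarrow> 'a set \<Rightarrow> nat \<Rightarrow> (nat \<Rightarrow> nat \<Rightarrow> nat) \<Rightarrow> bool" where
  "is_CRC V adj C rho alpha \<longleftrightarrow>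
     C \<subseteq> V \<and> C \<noteq> {} \<and>
     (\<forall>v\<in>V. \<exists>k. \<exists>c\<in>C. (v, c) \<in> edges V adj ^^ k) \<and>
     (\<forall>v\<in>V. dist_code V adj C v \<le> rho) \<and>
     (\<exists>v\<in>V. dist_code V adj C v = rho) \<and>
     (\<forall>i\<le>rho. \<forall>j\<le>rho. \<forall>v\<in>V. dist_code V adj C v = i \<longrightarrow>
        card {w\<in>V. adj v w \<and> dist_code V adj C w = j} = alpha i j) \<and>
     (\<forall>i\<le>rho. \<forall>j\<le>rho. (i + 1 < j \<or> j + 1 < i) \<longrightarrow> alpha i j = 0)"

(* all-ones: a_i = alpha i i = 1 for all i *)
definition all_ones :: "nat \<Rightarrow> (nat \<Rightarrow> nat \<Rightarrow> nat) \<Rightarrow> bool" where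
  "all_ones rho alpha \<longleftrightarrow> (\<forall>i\<le>rho. alpha i i = 1)"

definition Gn_V :: "nat \<Rightarrow> int list set" where
  "Gn_V n = {x. length x = n}"

definition Gn_adj :: "int list \<Rightarrow> int list \<Rightarrow> bool" where
  "Gn_adj x y \<longleftrightarrow> length x = length y \<and> (\<Sum>i<length x. \<bar>x ! i - y ! i\<bar>) = 1"

definition H_V :: "nat \<Rightarrow> bool list set" where
  "H_V m = {x. length x = m}"

definition H_adj :: "bool list \<Rightarrow> bool list \<Rightarrow> bool" where
  "H_adj x y \<longleftrightarrow> length x = length y \<and> card {i. i < length x \<and> x ! i \<noteq> y ! i} = 1"

(* Gray map on Z_4, with 0 = False, 1 = True *)
definition gray :: "int \<Rightarrow> bool list" where
  "gray a = (if a = 0 then [False, False] else if a = 1 then [True, False]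
             else if a = 2 then [True, True] else [False, True])"

definition tau :: "int list \<Rightarrow> bool list" where
  "tau x = concat (map (\<lambda>a. gray (a mod 4)) x)"

end

theory Submission
  imports Defs
begin

definition sh :: "int list \<Rightarrow> nat \<Rightarrow> int \<Rightarrow> int list" where
  "sh x i a = x[i := x!i + a]"

lemma length_sh[simp]: "length (sh x i a) = length x"
  by (simp add: sh_def)

lemma nth_sh: "j < length x \<Longrightarrow> sh x i a ! j = (if j = i then x!j + a else x!j)"
  by (auto simp: sh_def nth_list_update)

lemma sh_sh_same[simp]: "sh (sh x i a) i b = sh x i (a+b)"
  by (cases "i < length x") (auto simp: sh_def add.assoc list_update_beyond not_less)

lemma sh_comm: "i \<noteq> j \<Longrightarrow> sh (sh x i a) j b = sh (sh x j b) i a"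
  by (auto simp: sh_def list_update_swap nth_list_update_neq)

lemma sh_0[simp]: "sh x i 0 = x"
  by (simp add: sh_def)

lemma neq_at: "j < length x \<Longrightarrow> x ! j \<noteq> y ! j \<Longrightarrow> x \<noteq> y"
  by auto

lemma Gn_adj_sh:
  assumes "i < length x" "r = 1 \<or> r = -1"
  shows "Gn_adj x (sh x i r)"
proof -
  have "(\<Sum>k<length x. \<bar>x ! k - sh x i r ! k\<bar>) = (\<Sum>k<length x. if k = i then 1 else 0)"
    using assms by (intro sum.cong) (auto simp: nth_sh)
  also have "\<dots> = 1" using assms(1) by simp
  finally show ?thesis by (simp add: Gn_adj_def)
qed

lemma Gn_adj_sym: "Gn_adj x y \<Longrightarrow> Gn_adj y x"
  by (auto simp: Gn_adj_def abs_minus_commute)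

lemma Gn_adj_E:
  assumes "Gn_adj x y"
  shows "\<exists>i<length x. \<exists>r. (r = 1 \<or> r = -1) \<and> y = sh x i r"
proof -
  let ?t = "\<lambda>k. \<bar>x ! k - y ! k\<bar>"
  have len: "length y = length x" and s: "(\<Sum>k<length x. ?t k) = 1"
    using assms by (auto simp: Gn_adj_def)
  have "\<exists>i<length x. ?t i \<noteq> 0"
  proof (rule ccontr)
    assume "\<not> ?thesis"
    then have "(\<Sum>k<length x. ?t k) = 0" by (intro sum.neutral) auto
    with s show False by simp
  qed
  then obtain i where i: "i < length x" "?t i \<noteq> 0" by blast
  have split: "(\<Sum>k<length x. ?t k) = ?t i + (\<Sum>k\<in>{..<length x} - {i}. ?t k)"
    using i by (simp add: sum.remove)
  have nn: "(\<Sum>k\<in>{..<length x} - {i}. ?t k) \<ge> 0" by (intro sum_nonneg) auto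
  have ti: "?t i = 1" using s split nn i(2) by linarith
  have rest: "(\<Sum>k\<in>{..<length x} - {i}. ?t k) = 0" using s split ti by linarith
  have z: "\<forall>k\<in>{..<length x} - {i}. ?t k = 0"
    using rest by (subst (asm) sum_nonneg_eq_0_iff) auto
  define r where "r = y ! i - x ! i"
  have r: "r = 1 \<or> r = -1" using ti by (auto simp: r_def abs_if split: if_splits)
  have "y = sh x i r"
    by (rule nth_equalityI) (use len z i in \<open>auto simp: nth_sh r_def\<close>)
  with i r show ?thesis by blast
qed

lemma Gn_adj_iff: "Gn_adj x y \<longleftrightarrow> (\<exists>i<length x. \<exists>r. (r = 1 \<or> r = -1) \<and> y = sh x i r)"
  using Gn_adj_E Gn_adj_sh by blast

lemma dist_code_zero_iff:
  assumes conn: "\<forall>v\<in>V. \<exists>k. \<exists>c\<in>C. (v, c) \<in> edges V adj ^^ k" and "v \<in> V"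
  shows "dist_code V adj C v = 0 \<longleftrightarrow> v \<in> C"
proof
  assume "dist_code V adj C v = 0"
  moreover have "\<exists>c\<in>C. (v, c) \<in> edges V adj ^^ (dist_code V adj C v)"
  proof -
    have "\<exists>k. \<exists>c\<in>C. (v, c) \<in> edges V adj ^^ k" using conn assms(2) by blast
    from LeastI_ex[OF this] show ?thesis unfolding dist_code_def .
  qed
  ultimately show "v \<in> C" by auto
next
  assume "v \<in> C"
  then have "\<exists>c\<in>C. (v, c) \<in> edges V adj ^^ 0" by auto
  then show "dist_code V adj C v = 0" unfolding dist_code_def
    by (metis (mono_tags, lifting) Least_le le_zero_eq)
qed

lemma dist_code_lip:
  assumes conn: "\<forall>v\<in>V. \<exists>k. \<exists>c\<in>C. (v, c) \<in> edges V adj ^^ k"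
    and "v \<in> V" "w \<in> V" "adj v w"
  shows "dist_code V adj C v \<le> dist_code V adj C w + 1"
proof -
  have "\<exists>k. \<exists>c\<in>C. (w, c) \<in> edges V adj ^^ k" using conn assms(3) by blast
  from LeastI_ex[OF this] obtain c where c: "c \<in> C" "(w, c) \<in> edges V adj ^^ (dist_code V adj C w)"
    unfolding dist_code_def by blast
  have "(v, w) \<in> edges V adj" using assms by (simp add: edges_def)
  then have "(v, c) \<in> edges V adj ^^ Suc (dist_code V adj C w)"
    using c(2) by (rule relpow_Suc_I2)
  then show ?thesis unfolding dist_code_def
    using c(1) by (metis (mono_tags, lifting) Least_le Suc_eq_plus1)
qed


lemma sh_inj:
  assumes "i1 < length v" "i2 < length v" "r1 \<noteq> 0" "sh v i1 r1 = sh v i2 r2"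
  shows "i1 = i2 \<and> r1 = r2"
proof -
  have "sh v i1 r1 ! i1 = sh v i2 r2 ! i1" using assms(4) by simp
  then have e: "v ! i1 + r1 = (if i1 = i2 then v ! i1 + r2 else v ! i1)"
    using assms(1) by (simp add: nth_sh)
  then have "i1 = i2" using assms(3) by (auto split: if_splits)
  with e show ?thesis by simp
qed

lemma card1_eq: "card S = 1 \<Longrightarrow> a \<in> S \<Longrightarrow> b \<in> S \<Longrightarrow> a = b"
  by (metis card_1_singletonE singletonD)

lemma card2_no3: "card S = 2 \<Longrightarrow> a \<in> S \<Longrightarrow> b \<in> S \<Longrightarrow> c \<in> S \<Longrightarrow> a \<noteq> b \<Longrightarrow> a \<noteq> c \<Longrightarrow> b \<noteq> c \<Longrightarrow> False"
proof -
  assume h: "card S = 2" "a \<in> S" "b \<in> S" "c \<in> S" "a \<noteq> b" "a \<noteq> c" "b \<noteq> c"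
  then have "finite S" by (metis card.infinite zero_neq_numeral)
  then have "card {a,b,c} \<le> card S" using h by (intro card_mono) auto
  with h show False by simp
qed

lemma card2_other: "card S = 2 \<Longrightarrow> a \<in> S \<Longrightarrow> \<exists>b\<in>S. b \<noteq> a"
proof (rule ccontr)
  assume h: "card S = 2" "a \<in> S" "\<not> (\<exists>b\<in>S. b \<noteq> a)"
  then have "S = {a}" by blast
  with h show False by simp
qed

locale crc_grid =
  fixes n :: nat and C :: "int list set" and rho :: nat and alpha :: "nat \<Rightarrow> nat \<Rightarrow> nat"
  assumes crc: "is_CRC (Gn_V n) Gn_adj C rho alpha"
    and ones: "all_ones rho alpha"
    and rho2: "rho \<ge> 2"
    and c1: "alpha 1 0 = 1" and c2: "alpha 2 1 = 2"
begin

definition f where "f = dist_code (Gn_V n) Gn_adj C"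

lemma conn: "\<forall>v\<in>Gn_V n. \<exists>k. \<exists>c\<in>C. (v, c) \<in> edges (Gn_V n) Gn_adj ^^ k"
  using crc by (simp add: is_CRC_def)

lemma CV: "C \<subseteq> Gn_V n" using crc by (simp add: is_CRC_def)

lemma f_le: "v \<in> Gn_V n \<Longrightarrow> f v \<le> rho"
  using crc by (simp add: is_CRC_def f_def)

lemma cnt: "v \<in> Gn_V n \<Longrightarrow> j \<le> rho \<Longrightarrow> card {w\<in>Gn_V n. Gn_adj v w \<and> f w = j} = alpha (f v) j"
  using crc f_le[of v] unfolding is_CRC_def f_def by blast

lemma inV_sh[simp]: "sh x i a \<in> Gn_V n \<longleftrightarrow> x \<in> Gn_V n"
  by (simp add: Gn_V_def)

lemma f0: "x \<in> Gn_V n \<Longrightarrow> f x = 0 \<longleftrightarrow> x \<in> C"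
  unfolding f_def using dist_code_zero_iff[OF conn] by blast

lemma lenV: "x \<in> Gn_V n \<Longrightarrow> length x = n" by (simp add: Gn_V_def)

lemma adj_sh: "x \<in> Gn_V n \<Longrightarrow> i < n \<Longrightarrow> r = 1 \<or> r = -1 \<Longrightarrow> Gn_adj x (sh x i r)"
  by (rule Gn_adj_sh) (auto simp: Gn_V_def)

lemma lip1: "x \<in> Gn_V n \<Longrightarrow> i < n \<Longrightarrow> r = 1 \<or> r = -1 \<Longrightarrow> f x \<le> f (sh x i r) + 1"
  unfolding f_def by (rule dist_code_lip[OF conn]) (auto intro: adj_sh)

lemma lip2: "x \<in> Gn_V n \<Longrightarrow> i < n \<Longrightarrow> r = 1 \<or> r = -1 \<Longrightarrow> f (sh x i r) \<le> f x + 1"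
  unfolding f_def by (rule dist_code_lip[OF conn]) (auto intro: adj_sh Gn_adj_sym)

lemma nbr_mem: "v \<in> Gn_V n \<Longrightarrow> i < n \<Longrightarrow> r = 1 \<or> r = -1 \<Longrightarrow> f (sh v i r) = j \<Longrightarrow>
    sh v i r \<in> {w\<in>Gn_V n. Gn_adj v w \<and> f w = j}"
  by (auto intro: adj_sh)

lemma uniq:
  assumes "v \<in> Gn_V n" "j \<le> rho" "alpha (f v) j = 1"
    "i1 < n" "r1 = 1 \<or> r1 = -1" "i2 < n" "r2 = 1 \<or> r2 = -1"
    "f (sh v i1 r1) = j" "f (sh v i2 r2) = j"
  shows "i1 = i2 \<and> r1 = r2"
proof -
  have "sh v i1 r1 = sh v i2 r2"
    by (rule card1_eq[OF _ nbr_mem[of v i1 r1 j] nbr_mem[of v i2 r2 j]])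
       (use cnt[OF assms(1,2)] assms in auto)
  then show ?thesis using sh_inj[of i1 v i2 r1 r2] assms lenV by auto
qed

lemma eq_uniq:
  assumes "v \<in> Gn_V n" "i1 < n" "r1 = 1 \<or> r1 = -1" "i2 < n" "r2 = 1 \<or> r2 = -1"
    "f (sh v i1 r1) = f v" "f (sh v i2 r2) = f v"
  shows "i1 = i2 \<and> r1 = r2"
  using uniq[of v "f v" i1 r1 i2 r2] assms f_le ones by (auto simp: all_ones_def)

lemma ex_nb:
  assumes "v \<in> Gn_V n" "j \<le> rho" "alpha (f v) j \<ge> 1"
  shows "\<exists>i<n. \<exists>r. (r = 1 \<or> r = -1) \<and> f (sh v i r) = j"
proof -
  have "card {w\<in>Gn_V n. Gn_adj v w \<and> f w = j} \<ge> 1" using cnt assms by simp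
  then have "{w\<in>Gn_V n. Gn_adj v w \<and> f w = j} \<noteq> {}" by (metis card.empty not_one_le_zero)
  then obtain w where "w \<in> Gn_V n" "Gn_adj v w" "f w = j" by blast
  then show ?thesis using Gn_adj_E[of v w] lenV[OF assms(1)] by metis
qed

lemma no3:
  assumes "v \<in> Gn_V n" "j \<le> rho" "alpha (f v) j = 2"
    "i1 < n" "r1 = 1 \<or> r1 = -1" "i2 < n" "r2 = 1 \<or> r2 = -1" "i3 < n" "r3 = 1 \<or> r3 = -1"
    "f (sh v i1 r1) = j" "f (sh v i2 r2) = j" "f (sh v i3 r3) = j"
    "(i1, r1) \<noteq> (i2, r2)" "(i1, r1) \<noteq> (i3, r3)" "(i2, r2) \<noteq> (i3, r3)"
  shows False
proof -
  have d: "sh v a b \<noteq> sh v c d" if "a < n" "c < n" "b = 1 \<or> b = -1" "(a, b) \<noteq> (c, d)" for a b c d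
    using sh_inj[of a v c b d] that lenV[OF assms(1)] by auto
  show False
    by (rule card2_no3[OF _ nbr_mem[of v i1 r1 j] nbr_mem[of v i2 r2 j] nbr_mem[of v i3 r3 j]])
       (use cnt[OF assms(1,2)] assms d in auto)
qed

lemma ex_other:
  assumes "v \<in> Gn_V n" "j \<le> rho" "alpha (f v) j = 2"
    "i1 < n" "r1 = 1 \<or> r1 = -1" "f (sh v i1 r1) = j"
  shows "\<exists>i<n. \<exists>r. (r = 1 \<or> r = -1) \<and> f (sh v i r) = j \<and> (i, r) \<noteq> (i1, r1)"
proof -
  have "\<exists>w\<in>{w\<in>Gn_V n. Gn_adj v w \<and> f w = j}. w \<noteq> sh v i1 r1"
    by (rule card2_other[OF _ nbr_mem[of v i1 r1 j]]) (use cnt[OF assms(1,2)] assms in auto)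
  then obtain w where w: "w \<in> {w\<in>Gn_V n. Gn_adj v w \<and> f w = j}" "w \<noteq> sh v i1 r1"
    by blast
  then obtain i r where "i < n" "r = 1 \<or> r = -1" "w = sh v i r"
    using Gn_adj_E[of v w] lenV[OF assms(1)] by auto
  then show ?thesis using w by auto
qed

end


context crc_grid begin

lemma stack:
  assumes v: "v \<in> Gn_V n" and p: "p < n" "\<sigma> = 1 \<or> \<sigma> = -1" and eq: "f (sh v p \<sigma>) = f v"
    and j: "j < n" "j \<noteq> p" "t = 1 \<or> t = -1"
  shows "f (sh v j t) = f (sh (sh v p \<sigma>) j t)"
proof -
  let ?u = "sh v p \<sigma>"
  have A: "f (sh v j t) \<noteq> f v"
  proof
    assume "f (sh v j t) = f v"
    then have "j = p \<and> t = \<sigma>" using eq_uniq[OF v j(1) j(3) p(1,2)] eq by blast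
    with j show False by simp
  qed
  have uv: "sh ?u p (-\<sigma>) = v" by simp
  have B: "f (sh ?u j t) \<noteq> f v"
  proof
    assume h: "f (sh ?u j t) = f v"
    have "f (sh ?u p (-\<sigma>)) = f ?u" using uv eq by simp
    then have "j = p \<and> t = -\<sigma>" using eq_uniq[of ?u j t p "-\<sigma>"] h eq v j p by auto
    with j show False by simp
  qed
  have c: "sh ?u j t = sh (sh v j t) p \<sigma>" using j(2) by (simp add: sh_comm)
  have l1: "f (sh ?u j t) \<le> f (sh v j t) + 1" "f (sh v j t) \<le> f (sh ?u j t) + 1"
    using lip1[of "sh v j t" p \<sigma>] lip2[of "sh v j t" p \<sigma>] c v p by auto
  have l2: "f v \<le> f (sh v j t) + 1" "f (sh v j t) \<le> f v + 1"
    using lip1[OF v j(1) j(3)] lip2[OF v j(1) j(3)] by auto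
  have l3: "f ?u \<le> f (sh ?u j t) + 1" "f (sh ?u j t) \<le> f ?u + 1"
    using lip1[of ?u j t] lip2[of ?u j t] v j by auto
  show ?thesis using A B l1 l2 l3 eq by linarith
qed

lemma f_C: "z \<in> C \<Longrightarrow> f z = 0" using f0 CV by auto

lemma L1:
  assumes z: "z \<in> C" and p: "p < n" "\<sigma> = 1 \<or> \<sigma> = -1" "sh z p \<sigma> \<in> C"
    and j: "j < n" "t = 1 \<or> t = -1" "(j, t) \<noteq> (p, \<sigma>)"
  shows "f (sh z j t) = 1"
proof -
  have zV: "z \<in> Gn_V n" using z CV by auto
  have "f (sh z j t) \<noteq> 0"
  proof
    assume "f (sh z j t) = 0"
    then show False using eq_uniq[OF zV j(1,2) p(1,2)] f_C[OF z] f_C[OF p(3)] j(3) by auto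
  qed
  moreover have "f (sh z j t) \<le> 1" using lip2[OF zV j(1,2)] f_C[OF z] by simp
  ultimately show ?thesis by simp
qed

lemma Lp:
  assumes z: "z \<in> C" and p: "p < n" "\<sigma> = 1 \<or> \<sigma> = -1" "sh z p \<sigma> \<in> C"
  shows "sh z p (-3*\<sigma>) \<in> C \<and> sh z p (-4*\<sigma>) \<in> C"
proof -
  have zV: "z \<in> Gn_V n" using z CV by auto
  have sp: "-\<sigma> = 1 \<or> -\<sigma> = -1" using p by auto
  have sneq: "\<sigma> \<noteq> -\<sigma>" using p by auto
  define a where "a = sh z p (-\<sigma>)"
  have aV: "a \<in> Gn_V n" using zV by (simp add: a_def)
  have fa: "f a = 1" unfolding a_def by (rule L1[OF z p _ sp]) (use sneq p in auto)
  have az: "sh a p \<sigma> = z" by (simp add: a_def)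
  have faj: "f (sh a j t) = 2" if j: "j < n" "j \<noteq> p" "t = 1 \<or> t = -1" for j t
  proof -
    have b0: "f (sh z j t) = 1" by (rule L1[OF z p j(1,3)]) (use j in auto)
    have st: "f (sh z j t) = f (sh (sh z p \<sigma>) j t)"
      by (rule stack[OF zV p(1,2) _ j]) (use f_C[OF z] f_C[OF p(3)] in auto)
    have n0: "f (sh a j t) \<noteq> 0"
    proof
      assume h: "f (sh a j t) = 0"
      have "f (sh a p \<sigma>) = 0" using az f_C[OF z] by simp
      have "j = p \<and> t = \<sigma>"
        by (rule uniq[of a 0 j t p \<sigma>]) (use aV h fa c1 rho2 j p \<open>f (sh a p \<sigma>) = 0\<close> in auto)
      then have "j = p" by simp
      with j show False by simp
    qed
    have n1: "f (sh a j t) \<noteq> 1"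
    proof
      assume h: "f (sh a j t) = 1"
      have e1: "sh a j t = sh (sh z j t) p (-\<sigma>)" unfolding a_def using j(2) by (simp add: sh_comm)
      have e2: "sh (sh z j t) p \<sigma> = sh (sh z p \<sigma>) j t" using j(2) by (simp add: sh_comm)
      have f1: "f (sh (sh z j t) p (-\<sigma>)) = f (sh z j t)" using h e1 b0 by simp
      have f2: "f (sh (sh z j t) p \<sigma>) = f (sh z j t)" using e2 st by simp
      have "p = p \<and> -\<sigma> = \<sigma>"
        by (rule eq_uniq[of "sh z j t" p "-\<sigma>" p \<sigma>]) (use f1 f2 zV p sp in auto)
      with sneq show False by simp
    qed
    have "f (sh a j t) \<le> 2" using lip2[OF aV j(1,3)] fa by simp
    with n0 n1 show ?thesis by simp
  qed
  obtain i r where ir: "i < n" "r = 1 \<or> r = -1" "f (sh a i r) = 1"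
    using ex_nb[OF aV, of 1] fa ones rho2 by (auto simp: all_ones_def)
  have "i = p" using faj[OF ir(1) _ ir(2)] ir(3) by auto
  moreover have "r \<noteq> \<sigma>" using ir(3) az f_C[OF z] \<open>i = p\<close> by auto
  ultimately have ip: "i = p" "r = -\<sigma>" using ir(2) p(2) by auto
  define b where "b = sh a p (-\<sigma>)"
  have bV: "b \<in> Gn_V n" using aV by (simp add: b_def)
  have fb: "f b = 1" using ir ip by (simp add: b_def)
  have ba: "sh b p \<sigma> = a" by (simp add: b_def)
  have fbj: "f (sh b j t) = 2" if j: "j < n" "j \<noteq> p" "t = 1 \<or> t = -1" for j t
  proof -
    have "f (sh a j t) = f (sh (sh a p (-\<sigma>)) j t)"
      by (rule stack[OF aV p(1) sp _ j]) (use fa fb b_def in auto)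
    then show ?thesis using faj[OF j] b_def by simp
  qed
  obtain i2 r2 where ir2: "i2 < n" "r2 = 1 \<or> r2 = -1" "f (sh b i2 r2) = 0"
    using ex_nb[OF bV, of 0] fb c1 by auto
  have "i2 = p" using fbj[OF ir2(1) _ ir2(2)] ir2(3) by auto
  moreover have "r2 \<noteq> \<sigma>" using ir2(3) ba fa \<open>i2 = p\<close> by auto
  ultimately have ip2: "i2 = p" "r2 = -\<sigma>" using ir2(2) p(2) by auto
  define c where "c = sh b p (-\<sigma>)"
  have cC: "c \<in> C" using ir2 ip2 f0 bV by (simp add: c_def)
  have cV: "c \<in> Gn_V n" using bV by (simp add: c_def)
  have fc: "f c = 0" using f_C[OF cC] .
  have cb: "sh c p \<sigma> = b" by (simp add: c_def)
  obtain i3 r3 where ir3: "i3 < n" "r3 = 1 \<or> r3 = -1" "f (sh c i3 r3) = 0"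
    using ex_nb[OF cV, of 0] fc ones by (auto simp: all_ones_def)
  have "i3 = p"
  proof (rule ccontr)
    assume h: "i3 \<noteq> p"
    have e: "sh c i3 r3 = sh (sh b i3 r3) p (-\<sigma>)" unfolding c_def using h by (simp add: sh_comm)
    have "f (sh b i3 r3) \<le> f (sh c i3 r3) + 1" using lip1[of "sh b i3 r3" p "-\<sigma>"] e bV p sp by simp
    with fbj[OF ir3(1) h ir3(2)] ir3(3) show False by simp
  qed
  moreover have "r3 \<noteq> \<sigma>" using ir3(3) cb fb \<open>i3 = p\<close> by auto
  ultimately have ip3: "i3 = p" "r3 = -\<sigma>" using ir3(2) p(2) by auto
  have dC: "sh c p (-\<sigma>) \<in> C" using ir3(3) ip3 f0[of "sh c p (-\<sigma>)"] cV by simp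
  have e3: "c = sh z p (-3*\<sigma>)" unfolding c_def b_def a_def by simp
  have e4: "sh c p (-\<sigma>) = sh z p (-4*\<sigma>)" unfolding c_def b_def a_def by simp
  have d4: "sh z p (-4*\<sigma>) \<in> C" using dC e4 by metis
  have d3: "sh z p (-3*\<sigma>) \<in> C" using cC e3 by metis
  show ?thesis using d3 d4 by blast
qed

end


context crc_grid begin

lemma Lperp:
  assumes z: "z \<in> C" and p: "p < n" "\<sigma> = 1 \<or> \<sigma> = -1" "sh z p \<sigma> \<in> C"
    and i: "i < n" "i \<noteq> p" "s = 1 \<or> s = -1"
  shows "sh z i (4*s) \<in> C"
proof -
  have zV: "z \<in> Gn_V n" using z CV by auto
  have sp: "-\<sigma> = 1 \<or> -\<sigma> = -1" using p by auto
  have ms: "-s = 1 \<or> -s = -1" using i by auto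
  have sneq: "\<sigma> \<noteq> -\<sigma>" using p by auto
  have ssneq: "s \<noteq> -s" using i by auto
  have r0: "0 \<le> rho" "1 \<le> rho" "2 \<le> rho" using rho2 by auto
  define a where "a = sh z i s"
  have aV: "a \<in> Gn_V n" using zV by (simp add: a_def)
  have fa: "f a = 1" unfolding a_def by (rule L1[OF z p i(1,3)]) (use i in auto)
  have az: "sh a i (-s) = z" by (simp add: a_def)
  have stz: "f (sh z i s) = f (sh (sh z p \<sigma>) i s)"
    by (rule stack[OF zV p(1,2) _ i]) (use f_C[OF z] f_C[OF p(3)] in auto)
  have ap: "f (sh a p \<sigma>) = 1"
  proof -
    have "sh a p \<sigma> = sh (sh z p \<sigma>) i s" unfolding a_def using i(2) by (simp add: sh_comm)
    then show ?thesis using stz fa a_def by simp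
  qed
  have aC0: "j = i \<and> t = -s" if "j < n" "t = 1 \<or> t = -1" "f (sh a j t) = 0" for j t
    by (rule uniq[of a 0 j t i "-s"]) (use that aV fa c1 az f_C[OF z] i ms r0 in auto)
  have aP: "j = p \<and> t = \<sigma>" if "j < n" "t = 1 \<or> t = -1" "f (sh a j t) = 1" for j t
    by (rule eq_uniq[of a j t p \<sigma>]) (use that aV fa ap p in auto)
  define v where "v = sh a i s"
  have vV: "v \<in> Gn_V n" using aV by (simp add: v_def)
  have fv: "f v = 2"
  proof -
    have "f v \<le> 2" using lip2[OF aV i(1,3)] fa v_def by simp
    moreover have "f v \<noteq> 0" using aC0[OF i(1,3)] ssneq v_def by auto
    moreover have "f v \<noteq> 1" using aP[OF i(1,3)] i(2) v_def by auto
    ultimately show ?thesis by simp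
  qed
  have vp: "f (sh v p \<sigma>) = 2"
  proof -
    have "f (sh a i s) = f (sh (sh a p \<sigma>) i s)"
      by (rule stack[OF aV p(1,2) _ i]) (use fa ap in auto)
    moreover have "sh (sh a p \<sigma>) i s = sh v p \<sigma>" unfolding v_def using i(2) by (simp add: sh_comm)
    ultimately show ?thesis using fv v_def by simp
  qed
  have vP: "j = p \<and> t = \<sigma>" if "j < n" "t = 1 \<or> t = -1" "f (sh v j t) = 2" for j t
    by (rule eq_uniq[of v j t p \<sigma>]) (use that vV fv vp p in auto)
  have va: "sh v i (-s) = a" by (simp add: v_def)
  have f3l: "f (sh v l t) = 3" if l: "l < n" "l \<noteq> i" "l \<noteq> p" "t = 1 \<or> t = -1" for l t
  proof -
    have mt: "-t = 1 \<or> -t = -1" using l by auto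
    define w where "w = sh a l t"
    have wV: "w \<in> Gn_V n" using aV by (simp add: w_def)
    have fw: "f w = 2"
    proof -
      have "f w \<le> 2" using lip2[OF aV l(1,4)] fa w_def by simp
      moreover have "f w \<noteq> 0" using aC0[OF l(1,4)] l(2) w_def by auto
      moreover have "f w \<noteq> 1" using aP[OF l(1,4)] l(3) w_def by auto
      ultimately show ?thesis by simp
    qed
    define b where "b = sh z l t"
    have fb: "f b = 1" unfolding b_def by (rule L1[OF z p l(1,4)]) (use l in auto)
    have wb: "w = sh b i s" unfolding w_def a_def b_def using l(2) by (simp add: sh_comm)
    have yw: "sh v l t = sh w i s" unfolding w_def v_def using l(2) by (simp add: sh_comm)
    have up: "f (sh v l t) \<le> 3" using lip2[OF vV l(1,4)] fv by simp
    have lo: "2 \<le> f (sh v l t) + 1" using lip1[OF vV l(1,4)] fv by simp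
    have n2: "f (sh v l t) \<noteq> 2" using vP[OF l(1,4)] l(3) by auto
    have n1: "f (sh v l t) \<noteq> 1"
    proof
      assume h: "f (sh v l t) = 1"
      have e1: "sh w l (-t) = a" by (simp add: w_def)
      have e2: "sh w i (-s) = b" by (simp add: wb)
      show False
        by (rule no3[of w 1 l "-t" i "-s" i s]) (use wV fw c2 r0 l i mt ms e1 e2 fa fb h yw ssneq in auto)
    qed
    show ?thesis using up lo n1 n2 by simp
  qed
  have f3p: "f (sh v p (-\<sigma>)) = 3"
  proof -
    define w where "w = sh a p (-\<sigma>)"
    have wV: "w \<in> Gn_V n" using aV by (simp add: w_def)
    have fw: "f w = 2"
    proof -
      have "f w \<le> 2" using lip2[OF aV p(1) sp] fa w_def by simp
      moreover have "f w \<noteq> 0" using aC0[OF p(1) sp] i(2) w_def by auto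
      moreover have "f w \<noteq> 1" using aP[OF p(1) sp] sneq w_def by auto
      ultimately show ?thesis by simp
    qed
    define b where "b = sh z p (-\<sigma>)"
    have fb: "f b = 1" unfolding b_def by (rule L1[OF z p p(1) sp]) (use sneq in auto)
    have wb: "w = sh b i s" unfolding w_def a_def b_def using i(2) by (simp add: sh_comm)
    have yw: "sh v p (-\<sigma>) = sh w i s" unfolding w_def v_def using i(2) by (simp add: sh_comm)
    have up: "f (sh v p (-\<sigma>)) \<le> 3" using lip2[OF vV p(1) sp] fv by simp
    have lo: "2 \<le> f (sh v p (-\<sigma>)) + 1" using lip1[OF vV p(1) sp] fv by simp
    have n2: "f (sh v p (-\<sigma>)) \<noteq> 2" using vP[OF p(1) sp] sneq by auto
    have n1: "f (sh v p (-\<sigma>)) \<noteq> 1"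
    proof
      assume h: "f (sh v p (-\<sigma>)) = 1"
      have e1: "sh w p \<sigma> = a" by (simp add: w_def)
      have e2: "sh w i (-s) = b" by (simp add: wb)
      show False
        by (rule no3[of w 1 p \<sigma> i "-s" i s]) (use wV fw c2 r0 p i ms e1 e2 fa fb h yw ssneq in auto)
    qed
    show ?thesis using up lo n1 n2 by simp
  qed
  have fx: "f (sh v i s) = 1"
  proof -
    obtain j r where jr: "j < n" "r = 1 \<or> r = -1" "f (sh v j r) = 1" "(j, r) \<noteq> (i, -s)"
      using ex_other[of v 1 i "-s"] vV r0 fv c2 i ms va fa by auto
    show ?thesis
    proof (cases "j = i")
      case True
      then have "r = s" using jr(2,4) i(3) by auto
      then show ?thesis using jr True by simp
    next
      case False
      show ?thesis
      proof (cases "j = p")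
        case True
        then show ?thesis using jr vp f3p p(2) by (cases "r = \<sigma>") auto
      next
        case False
        then show ?thesis using jr f3l[of j r] \<open>j \<noteq> i\<close> by auto
      qed
    qed
  qed
  define x where "x = sh v i s"
  have xV: "x \<in> Gn_V n" using vV by (simp add: x_def)
  obtain j r where jr: "j < n" "r = 1 \<or> r = -1" "f (sh x j r) = 0"
    using ex_nb[of x 0] xV fx c1 x_def by auto
  have xv: "sh x i (-s) = v" by (simp add: x_def)
  have ji: "j = i"
  proof (rule ccontr)
    assume h: "j \<noteq> i"
    have e: "sh x j r = sh (sh v j r) i s" unfolding x_def using h by (simp add: sh_comm)
    have "f (sh v j r) \<le> f (sh x j r) + 1" using lip1[of "sh v j r" i s] e vV i by simp
    then have le1: "f (sh v j r) \<le> 1" using jr(3) by simp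
    show False
    proof (cases "j = p")
      case True
      then show False using le1 vp f3p jr(2) p(2) by (cases "r = \<sigma>") auto
    next
      case False
      then show False using le1 f3l[OF jr(1) h False jr(2)] by simp
    qed
  qed
  have rs: "r = s"
  proof (rule ccontr)
    assume "r \<noteq> s"
    then have "r = -s" using jr(2) i(3) by auto
    then show False using jr(3) ji xv fv by simp
  qed
  have "sh x i s \<in> C" using jr ji rs f0 xV by simp
  moreover have "sh x i s = sh z i (4*s)" unfolding x_def v_def a_def by simp
  ultimately show ?thesis by simp
qed

lemma per1:
  assumes z: "z \<in> C" and i: "i < n" "s = 1 \<or> s = -1"
  shows "sh z i (4*s) \<in> C"
proof -
  have zV: "z \<in> Gn_V n" using z CV by auto
  obtain p \<sigma> where p: "p < n" "\<sigma> = 1 \<or> \<sigma> = -1" "f (sh z p \<sigma>) = 0"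
    using ex_nb[of z 0] zV f_C[OF z] ones by (auto simp: all_ones_def)
  have pC: "sh z p \<sigma> \<in> C" using p(3) f0 zV by simp
  show ?thesis
  proof (cases "i = p")
    case False
    then show ?thesis using Lperp[OF z p(1,2) pC i(1) False i(2)] by simp
  next
    case True
    show ?thesis
    proof (cases "s = \<sigma>")
      case False
      then have "s = -\<sigma>" using i(2) p(2) by auto
      then show ?thesis using Lp[OF z p(1,2) pC] True by simp
    next
      case st: True
      let ?z' = "sh z p \<sigma>"
      have "sh ?z' p (-\<sigma>) \<in> C" using z by simp
      then have "sh ?z' p (-3*(-\<sigma>)) \<in> C" using Lp[OF pC p(1), of "-\<sigma>"] p(2) by auto
      moreover have "sh ?z' p (-3*(-\<sigma>)) = sh z p (4*s)" using st by simp
      ultimately show ?thesis using True by simp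
    qed
  qed
qed

end


context crc_grid begin

lemma perk: "z \<in> C \<Longrightarrow> i < n \<Longrightarrow> sh z i (4*t) \<in> C"
proof (induction t rule: int_induct[where k=0])
  case base
  then show ?case by simp
next
  case (step1 t)
  then have "sh (sh z i (4*t)) i (4*1) \<in> C" using per1[of "sh z i (4*t)" i 1] by simp
  then show ?case by (simp add: algebra_simps)
next
  case (step2 t)
  then have "sh (sh z i (4*t)) i (4*(-1)) \<in> C" using per1[of "sh z i (4*t)" i "-1"] by simp
  then show ?case by (simp add: algebra_simps)
qed

lemma per_mod:
  assumes x: "x \<in> C" and y: "y \<in> Gn_V n" and m: "\<forall>i<n. x!i mod 4 = y!i mod 4"
  shows "y \<in> C"
proof -
  have xV: "x \<in> Gn_V n" using x CV by auto
  have lx: "length x = n" and ly: "length y = n" using xV y by (auto simp: Gn_V_def)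
  define w where "w m = map (\<lambda>k. if k < m then y!k else x!k) [0..<n]" for m
  have "w m \<in> C" if "m \<le> n" for m
    using that
  proof (induction m)
    case 0
    have "w 0 = x" unfolding w_def using lx by (intro nth_equalityI) auto
    then show ?case using x by simp
  next
    case (Suc m)
    then have wm: "w m \<in> C" by simp
    have "4 dvd (x!m - y!m)" using m Suc.prems by (simp add: mod_eq_dvd_iff)
    then have d: "4 dvd (y!m - x!m)" by (simp add: dvd_diff_commute)
    define t where "t = (y!m - x!m) div 4"
    have t: "y!m - x!m = 4 * t" using d by (simp add: t_def)
    have "w (Suc m) = sh (w m) m (4*t)"
      unfolding w_def using Suc.prems t by (intro nth_equalityI) (auto simp: nth_sh)
    then show ?case using perk[OF wm, of m t] Suc.prems by simp
  qed
  moreover have "w n = y" unfolding w_def using ly by (intro nth_equalityI) auto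
  ultimately show ?thesis by auto
qed

end

definition hdist :: "bool list \<Rightarrow> bool list \<Rightarrow> nat" where
  "hdist u w = card {q. q < length u \<and> u ! q \<noteq> w ! q}"

lemma hdist_Nil[simp]: "hdist [] w = 0"
  by (simp add: hdist_def)

lemma hdist_Cons: "hdist (a # u) (b # w) = (if a \<noteq> b then 1 else 0) + hdist u w"
proof -
  have e: "{q. q < length (a # u) \<and> (a # u) ! q \<noteq> (b # w) ! q} =
      (if a \<noteq> b then {0} else {}) \<union> Suc ` {q. q < length u \<and> u ! q \<noteq> w ! q}"
  proof (rule set_eqI)
    fix q show "q \<in> {q. q < length (a # u) \<and> (a # u) ! q \<noteq> (b # w) ! q} \<longleftrightarrow>
      q \<in> (if a \<noteq> b then {0} else {}) \<union> Suc ` {q. q < length u \<and> u ! q \<noteq> w ! q}"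
      by (cases q) (auto simp: inj_image_mem_iff)
  qed
  have "card ((if a \<noteq> b then {0} else {}) \<union> Suc ` {q. q < length u \<and> u ! q \<noteq> w ! q}) =
        card (if a \<noteq> b then {0::nat} else {}) + card (Suc ` {q. q < length u \<and> u ! q \<noteq> w ! q})"
    by (intro card_Un_disjoint) auto
  also have "card (Suc ` {q. q < length u \<and> u ! q \<noteq> w ! q}) = hdist u w"
    unfolding hdist_def by (intro card_image) auto
  finally show ?thesis using e by (simp add: hdist_def)
qed

lemma hdist_append: "length u1 = length w1 \<Longrightarrow> hdist (u1 @ u2) (w1 @ w2) = hdist u1 w1 + hdist u2 w2"
proof (induction u1 w1 rule: list_induct2)
  case Nil
  then show ?case by simp
next
  case (Cons a u b w)
  then show ?case by (simp add: hdist_Cons)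
qed

lemma length_gray[simp]: "length (gray a) = 2"
  by (simp add: gray_def)

lemma tau_Nil[simp]: "tau [] = []" by (simp add: tau_def)
lemma tau_Cons[simp]: "tau (a # x) = gray (a mod 4) @ tau x" by (simp add: tau_def)

lemma length_tau[simp]: "length (tau x) = 2 * length x"
  by (induction x) auto

definition lee :: "int \<Rightarrow> int \<Rightarrow> nat" where
  "lee a b = hdist (gray (a mod 4)) (gray (b mod 4))"

lemma hdist_tau: "length x = length y \<Longrightarrow> hdist (tau x) (tau y) = (\<Sum>i<length x. lee (x!i) (y!i))"
proof (induction x y rule: list_induct2)
  case Nil
  then show ?case by simp
next
  case (Cons a x b y)
  then show ?case by (simp add: hdist_append lee_def sum.lessThan_Suc_shift del: sum.lessThan_Suc)
qed

lemma mod4_cases: "(a::int) mod 4 = 0 \<or> a mod 4 = 1 \<or> a mod 4 = 2 \<or> a mod 4 = 3"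
  by presburger

lemma lee_val: "lee a b = (if (a - b) mod 4 = 0 then 0 else if (a - b) mod 4 = 2 then 2 else 1)"
proof -
  have e: "(a - b) mod 4 = (a mod 4 - b mod 4) mod 4" by (simp add: mod_diff_eq)
  show ?thesis
    using mod4_cases[of a] mod4_cases[of b]
    by (elim disjE) (simp_all add: lee_def gray_def hdist_Cons e)
qed

lemma lee0: "lee a b = 0 \<longleftrightarrow> a mod 4 = b mod 4"
  by (simp add: lee_val mod_eq_dvd_iff dvd_eq_mod_eq_0)

lemma tau_cong: "length a = length b \<Longrightarrow> (\<forall>k<length a. a!k mod 4 = b!k mod 4) \<Longrightarrow> tau a = tau b"
  unfolding tau_def
  by (rule arg_cong[where f=concat]) (rule nth_equalityI, auto)

lemma tau_inj_mod:
  assumes "length a = length b" "tau a = tau b"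
  shows "\<forall>k<length a. a!k mod 4 = b!k mod 4"
proof -
  have "hdist (tau a) (tau b) = 0" using assms(2) by (simp add: hdist_def)
  then have "(\<Sum>i<length a. lee (a!i) (b!i)) = 0" using hdist_tau[OF assms(1)] by simp
  then show ?thesis using lee0 by simp
qed

lemma H_adj_tau:
  "length x = length y \<Longrightarrow> H_adj (tau x) (tau y) \<longleftrightarrow> (\<Sum>i<length x. lee (x!i) (y!i)) = 1"
  using hdist_tau[of x y] by (simp add: H_adj_def hdist_def)

lemma tau_hom:
  assumes "Gn_adj x y" shows "H_adj (tau x) (tau y)"
proof -
  obtain i r where ir: "i < length x" "r = 1 \<or> r = -1" "y = sh x i r" using Gn_adj_E[OF assms] by blast
  have "(\<Sum>k<length x. lee (x!k) (y!k)) = (\<Sum>k<length x. if k = i then 1 else 0)"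
  proof (intro sum.cong refl)
    fix k assume k: "k \<in> {..<length x}"
    show "lee (x!k) (y!k) = (if k = i then 1 else 0)"
    proof (cases "k = i")
      case True
      have "(x!i - (x!i + r)) mod 4 \<noteq> 0 \<and> (x!i - (x!i + r)) mod 4 \<noteq> 2" using ir(2) by auto
      then show ?thesis using True ir k by (simp add: nth_sh lee_val)
    next
      case False
      then show ?thesis using ir k by (simp add: nth_sh lee_val)
    qed
  qed
  also have "\<dots> = 1" using ir(1) by simp
  finally show ?thesis using H_adj_tau[of x y] ir by simp
qed

lemma tau_surj: "length w = 2 * m \<Longrightarrow> \<exists>y. length y = m \<and> tau y = w"
proof (induction m arbitrary: w)
  case 0
  then show ?case by simp
next
  case (Suc m)
  then obtain b1 b2 w' where w: "w = b1 # b2 # w'" "length w' = 2 * m"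
    by (metis Suc_length_conv mult_Suc_right add_2_eq_Suc)
  obtain y' where y': "length y' = m" "tau y' = w'" using Suc.IH w(2) by blast
  obtain a :: int where a: "gray (a mod 4) = [b1, b2]"
  proof -
    have "\<exists>a::int. gray (a mod 4) = [b1, b2]"
      by (cases b1; cases b2) (rule exI[where x=0] exI[where x=1] exI[where x=2] exI[where x=3],
          simp add: gray_def)+
    then show ?thesis using that by blast
  qed
  show ?case using a y' w by (intro exI[where x="a # y'"]) simp
qed

lemma sum_eq_1_nat:
  fixes g :: "nat \<Rightarrow> nat"
  assumes "(\<Sum>k<N. g k) = 1"
  shows "\<exists>i<N. g i = 1 \<and> (\<forall>k<N. k \<noteq> i \<longrightarrow> g k = 0)"
proof -
  have "\<exists>i<N. g i \<noteq> 0"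
  proof (rule ccontr)
    assume "\<not> ?thesis"
    then have "(\<Sum>k<N. g k) = 0" by simp
    with assms show False by simp
  qed
  then obtain i where i: "i < N" "g i \<noteq> 0" by blast
  have sp: "(\<Sum>k<N. g k) = g i + (\<Sum>k\<in>{..<N} - {i}. g k)"
    using i by (simp add: sum.remove)
  then have gi: "g i = 1" and r: "(\<Sum>k\<in>{..<N} - {i}. g k) = 0" using assms i(2) by linarith+
  have "\<forall>k<N. k \<noteq> i \<longrightarrow> g k = 0" using r by simp
  with i gi show ?thesis by blast
qed

lemma tau_lift:
  assumes x: "length x = n" and w: "length w = 2 * n" and adj: "H_adj (tau x) w"
  shows "\<exists>y. Gn_adj x y \<and> tau y = w"
proof -
  obtain y' where y': "length y' = n" "tau y' = w" using tau_surj[OF w] by blast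
  have "(\<Sum>k<n. lee (x!k) (y'!k)) = 1" using H_adj_tau[of x y'] adj y' x by simp
  then obtain i where i: "i < n" "lee (x!i) (y'!i) = 1" "\<forall>k<n. k \<noteq> i \<longrightarrow> lee (x!k) (y'!k) = 0"
    using sum_eq_1_nat by blast
  have c1: "(x!i - y'!i) mod 4 = 1 \<or> (x!i - y'!i) mod 4 = 3"
    using i(2) mod4_cases[of "x!i - y'!i"] by (auto simp: lee_val split: if_splits)
  define r :: int where "r = (if (x!i - y'!i) mod 4 = 3 then 1 else -1)"
  have r: "r = 1 \<or> r = -1" by (simp add: r_def)
  have ri: "(x!i + r) mod 4 = y'!i mod 4" using c1 unfolding r_def by (elim disjE) presburger+
  define y where "y = sh x i r"
  have "tau y = tau y'"
  proof (rule tau_cong)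
    show "length y = length y'" using x y' by (simp add: y_def)
    show "\<forall>k<length y. y!k mod 4 = y'!k mod 4"
      using i(3) ri x lee0 by (auto simp: y_def nth_sh)
  qed
  moreover have "Gn_adj x y" unfolding y_def using i(1) x r by (intro Gn_adj_sh) auto
  ultimately show ?thesis using y' by auto
qed

lemma tau_nb_inj:
  assumes "Gn_adj x y1" "Gn_adj x y2" "tau y1 = tau y2"
  shows "y1 = y2"
proof -
  obtain i1 r1 where a: "i1 < length x" "r1 = 1 \<or> r1 = -1" "y1 = sh x i1 r1" using Gn_adj_E[OF assms(1)] by blast
  obtain i2 r2 where b: "i2 < length x" "r2 = 1 \<or> r2 = -1" "y2 = sh x i2 r2" using Gn_adj_E[OF assms(2)] by blast
  have m: "\<forall>k<length y1. y1!k mod 4 = y2!k mod 4" using tau_inj_mod[of y1 y2] assms(3) a b by simp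
  have m1: "(x!i1 + r1) mod 4 = (if i1 = i2 then x!i1 + r2 else x!i1) mod 4"
    using m a b by (auto simp: nth_sh)
  have "i1 = i2"
  proof (rule ccontr)
    assume "i1 \<noteq> i2"
    then have "(x!i1 + r1) mod 4 = x!i1 mod 4" using m1 by simp
    with a(2) show False by presburger
  qed
  moreover have "r1 = r2"
    using m1 \<open>i1 = i2\<close> a(2) b(2) by simp presburger
  ultimately show ?thesis using a b by simp
qed


lemma walk_map:
  assumes hom: "\<And>x y. x \<in> V1 \<Longrightarrow> y \<in> V1 \<Longrightarrow> adj1 x y \<Longrightarrow> adj2 (\<phi> x) (\<phi> y)"
    and maps: "\<And>x. x \<in> V1 \<Longrightarrow> \<phi> x \<in> V2"
  shows "(x, c) \<in> edges V1 adj1 ^^ k \<Longrightarrow> (\<phi> x, \<phi> c) \<in> edges V2 adj2 ^^ k"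
proof (induction k arbitrary: x)
  case 0
  then show ?case by simp
next
  case (Suc k)
  then obtain b where b: "(x, b) \<in> edges V1 adj1" "(b, c) \<in> edges V1 adj1 ^^ k"
    by (meson relpow_Suc_E2)
  have "(\<phi> x, \<phi> b) \<in> edges V2 adj2" using b(1) hom maps by (auto simp: edges_def)
  moreover have "(\<phi> b, \<phi> c) \<in> edges V2 adj2 ^^ k" using Suc.IH b(2) by blast
  ultimately show ?case by (rule relpow_Suc_I2)
qed

lemma walk_lift:
  assumes lift: "\<And>x w. x \<in> V1 \<Longrightarrow> w \<in> V2 \<Longrightarrow> adj2 (\<phi> x) w \<Longrightarrow> \<exists>y\<in>V1. adj1 x y \<and> \<phi> y = w"
  shows "x \<in> V1 \<Longrightarrow> (\<phi> x, c2) \<in> edges V2 adj2 ^^ k \<Longrightarrow>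
     \<exists>c\<in>V1. (x, c) \<in> edges V1 adj1 ^^ k \<and> \<phi> c = c2"
proof (induction k arbitrary: x)
  case 0
  then show ?case by auto
next
  case (Suc k)
  then obtain b where b: "(\<phi> x, b) \<in> edges V2 adj2" "(b, c2) \<in> edges V2 adj2 ^^ k"
    by (meson relpow_Suc_E2)
  obtain y where y: "y \<in> V1" "adj1 x y" "\<phi> y = b" using lift[of x b] b(1) Suc.prems(1)
    by (auto simp: edges_def)
  obtain c where c: "c \<in> V1" "(y, c) \<in> edges V1 adj1 ^^ k" "\<phi> c = c2"
    using Suc.IH[OF y(1)] b(2) y(3) by blast
  have "(x, y) \<in> edges V1 adj1" using y Suc.prems(1) by (simp add: edges_def)
  then have "(x, c) \<in> edges V1 adj1 ^^ Suc k" using c(2) by (rule relpow_Suc_I2)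
  with c show ?case by blast
qed

context crc_grid begin

definition D where "D = tau ` C"

lemma Ceq: "C = {x \<in> Gn_V n. tau x \<in> D}"
proof
  show "C \<subseteq> {x \<in> Gn_V n. tau x \<in> D}" using CV by (auto simp: D_def)
next
  show "{x \<in> Gn_V n. tau x \<in> D} \<subseteq> C"
  proof
    fix x assume "x \<in> {x \<in> Gn_V n. tau x \<in> D}"
    then obtain c where x: "x \<in> Gn_V n" and c: "c \<in> C" "tau x = tau c" by (auto simp: D_def)
    have cV: "c \<in> Gn_V n" using c CV by auto
    have "\<forall>k<length c. c!k mod 4 = x!k mod 4"
      using tau_inj_mod[of c x] c x cV by (simp add: Gn_V_def)
    then show "x \<in> C" using per_mod[OF c(1) x] cV by (simp add: Gn_V_def)
  qed
qed

lemma hom': "x \<in> Gn_V n \<Longrightarrow> y \<in> Gn_V n \<Longrightarrow> Gn_adj x y \<Longrightarrow> H_adj (tau x) (tau y)"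
  by (rule tau_hom)

lemma maps': "x \<in> Gn_V n \<Longrightarrow> tau x \<in> H_V (2 * n)"
  by (simp add: Gn_V_def H_V_def)

lemma lift': "x \<in> Gn_V n \<Longrightarrow> w \<in> H_V (2 * n) \<Longrightarrow> H_adj (tau x) w \<Longrightarrow>
    \<exists>y\<in>Gn_V n. Gn_adj x y \<and> tau y = w"
proof -
  assume a: "x \<in> Gn_V n" "w \<in> H_V (2 * n)" "H_adj (tau x) w"
  then obtain y where "Gn_adj x y" "tau y = w" using tau_lift[of x n w] by (auto simp: Gn_V_def H_V_def)
  moreover then have "y \<in> Gn_V n" using a(1) by (auto simp: Gn_V_def Gn_adj_def)
  ultimately show ?thesis by blast
qed

lemma surj': "v \<in> H_V (2 * n) \<Longrightarrow> \<exists>x\<in>Gn_V n. tau x = v"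
  using tau_surj[of v n] by (auto simp: Gn_V_def H_V_def)

lemma reach_eq:
  assumes x: "x \<in> Gn_V n"
  shows "(\<exists>c\<in>C. (x, c) \<in> edges (Gn_V n) Gn_adj ^^ k) \<longleftrightarrow>
         (\<exists>c2\<in>D. (tau x, c2) \<in> edges (H_V (2*n)) H_adj ^^ k)"
proof
  assume "\<exists>c\<in>C. (x, c) \<in> edges (Gn_V n) Gn_adj ^^ k"
  then obtain c where "c \<in> C" "(x, c) \<in> edges (Gn_V n) Gn_adj ^^ k" by blast
  then show "\<exists>c2\<in>D. (tau x, c2) \<in> edges (H_V (2*n)) H_adj ^^ k"
    using walk_map[of "Gn_V n" Gn_adj H_adj tau "H_V (2*n)", OF hom' maps'] by (auto simp: D_def)
next
  assume "\<exists>c2\<in>D. (tau x, c2) \<in> edges (H_V (2*n)) H_adj ^^ k"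
  then obtain c2 where c2: "c2 \<in> D" "(tau x, c2) \<in> edges (H_V (2*n)) H_adj ^^ k" by blast
  then obtain c where "c \<in> Gn_V n" "(x, c) \<in> edges (Gn_V n) Gn_adj ^^ k" "tau c = c2"
    using walk_lift[of "Gn_V n" "H_V (2*n)" H_adj tau Gn_adj, OF lift' x] by blast
  moreover then have "c \<in> C" using Ceq c2(1) by auto
  ultimately show "\<exists>c\<in>C. (x, c) \<in> edges (Gn_V n) Gn_adj ^^ k" by blast
qed

lemma dist_eq:
  assumes x: "x \<in> Gn_V n"
  shows "dist_code (H_V (2*n)) H_adj D (tau x) = f x"
  unfolding f_def dist_code_def using reach_eq[OF x] by simp

lemma nbr_img:
  assumes x: "x \<in> Gn_V n"
  shows "{w \<in> H_V (2*n). H_adj (tau x) w \<and> dist_code (H_V (2*n)) H_adj D w = j} =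
         tau ` {y \<in> Gn_V n. Gn_adj x y \<and> f y = j}"
proof
  show "{w \<in> H_V (2*n). H_adj (tau x) w \<and> dist_code (H_V (2*n)) H_adj D w = j} \<subseteq>
         tau ` {y \<in> Gn_V n. Gn_adj x y \<and> f y = j}"
  proof
    fix w assume w: "w \<in> {w \<in> H_V (2*n). H_adj (tau x) w \<and> dist_code (H_V (2*n)) H_adj D w = j}"
    then obtain y where y: "y \<in> Gn_V n" "Gn_adj x y" "tau y = w" using lift'[OF x] by auto
    then have "f y = j" using dist_eq[OF y(1)] w by auto
    with y show "w \<in> tau ` {y \<in> Gn_V n. Gn_adj x y \<and> f y = j}" by auto
  qed
next
  show "tau ` {y \<in> Gn_V n. Gn_adj x y \<and> f y = j} \<subseteq>
        {w \<in> H_V (2*n). H_adj (tau x) w \<and> dist_code (H_V (2*n)) H_adj D w = j}"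
    using dist_eq maps' hom'[OF x] by auto
qed

lemma card_eq:
  assumes x: "x \<in> Gn_V n"
  shows "card {w \<in> H_V (2*n). H_adj (tau x) w \<and> dist_code (H_V (2*n)) H_adj D w = j} =
         card {y \<in> Gn_V n. Gn_adj x y \<and> f y = j}"
  unfolding nbr_img[OF x]
  by (rule card_image) (auto intro: inj_onI tau_nb_inj)

lemma D_CRC: "is_CRC (H_V (2 * n)) H_adj D rho alpha"
proof -
  have Cne: "C \<noteq> {}" using crc by (simp add: is_CRC_def)
  have ex_rho: "\<exists>v\<in>Gn_V n. f v = rho" using crc by (simp add: is_CRC_def f_def)
  have zero: "\<forall>i\<le>rho. \<forall>j\<le>rho. (i + 1 < j \<or> j + 1 < i) \<longrightarrow> alpha i j = 0"
    using crc by (simp add: is_CRC_def)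
  have 1: "D \<subseteq> H_V (2 * n)" using CV maps' by (auto simp: D_def)
  have 2: "D \<noteq> {}" using Cne by (simp add: D_def)
  have 3: "\<forall>v\<in>H_V (2 * n). \<exists>k. \<exists>c\<in>D. (v, c) \<in> edges (H_V (2 * n)) H_adj ^^ k"
  proof
    fix v assume "v \<in> H_V (2 * n)"
    then obtain x where x: "x \<in> Gn_V n" "tau x = v" using surj' by blast
    then obtain k where "\<exists>c\<in>C. (x, c) \<in> edges (Gn_V n) Gn_adj ^^ k" using conn by blast
    then show "\<exists>k. \<exists>c\<in>D. (v, c) \<in> edges (H_V (2 * n)) H_adj ^^ k" using reach_eq[OF x(1)] x(2) by blast
  qed
  have 4: "\<forall>v\<in>H_V (2 * n). dist_code (H_V (2 * n)) H_adj D v \<le> rho"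
    using surj' dist_eq f_le by fastforce
  have 5: "\<exists>v\<in>H_V (2 * n). dist_code (H_V (2 * n)) H_adj D v = rho"
    using ex_rho dist_eq maps' by fastforce
  have 6: "\<forall>i\<le>rho. \<forall>j\<le>rho. \<forall>v\<in>H_V (2 * n). dist_code (H_V (2 * n)) H_adj D v = i \<longrightarrow>
        card {w\<in>H_V (2 * n). H_adj v w \<and> dist_code (H_V (2 * n)) H_adj D w = j} = alpha i j"
  proof (intro allI impI ballI)
    fix i j v assume ij: "i \<le> rho" "j \<le> rho" and v: "v \<in> H_V (2 * n)"
      and d: "dist_code (H_V (2 * n)) H_adj D v = i"
    obtain x where x: "x \<in> Gn_V n" "tau x = v" using surj' v by blast
    have "f x = i" using dist_eq[OF x(1)] x(2) d by simp
    then show "card {w\<in>H_V (2 * n). H_adj v w \<and> dist_code (H_V (2 * n)) H_adj D w = j} = alpha i j"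
      using card_eq[OF x(1), of j] cnt[OF x(1) ij(2)] x(2) by simp
  qed
  show ?thesis unfolding is_CRC_def using 1 2 3 4 5 6 zero by blast
qed

end

theorem mainTheorem10:
  fixes n rho :: nat and C :: "int list set" and alpha :: "nat \<Rightarrow> nat \<Rightarrow> nat"
  assumes "n \<ge> 1"
    and "is_CRC (Gn_V n) Gn_adj C rho alpha"
    and "all_ones rho alpha"
    and "rho \<ge> 2"
    and "alpha 1 0 = 1"
    and "alpha 2 1 = 2"
  shows "\<exists>D. is_CRC (H_V (2 * n)) H_adj D rho alpha \<and>
             C = {x \<in> Gn_V n. tau x \<in> D}"
proof -
  interpret crc_grid n C rho alpha using assms by unfold_locales auto
  show ?thesis using D_CRC Ceq by blast
qed

end
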